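(* Let $\Phi$ be an $e$-dimensional formal group law over $k$, $m\in\mathbb N_{>0}\cup\{\infty\}$, and let $(K,\mathbb D)$ be a $\Phi[m]$-field. Then $[K:C_K]\le p^e$.
   Context: $k$ is a field of characteristic $p>0$. For a $k$-algebra $R$, $R[\bar v]:=R[X_1,\dots,X_e]/(X_1^{p^m},\dots,X_e^{p^m})$ ($R[[\bar X]]$ if $m=\infty$); $\bar w$ is a second $e$-tuple of $m$-truncated variables. $\Phi[m]\in(k[\bar v,\bar w])^e$ denotes the image of $\Phi(\bar X,\bar Y)$ under $X_i\mapsto v_i$, $Y_i\mapsto w_i$ ($\Phi[\infty]=\Phi$). An $m$-truncated $e$-dimensional HS-derivation on $R$ over $k$ is a family $(D_{\mathbf i}:R\to R)_{\mathbf i\in\{0,\dots,p^m-1\}^e}$ such that $r\mapsto\sum D_{\mathbf i}(r)\bar v^{\mathbf i}$ is a $k$-algebra homomorphism $R\to R[\bar v]$ with $D_{\mathbf 0}=\mathrm{id}$. For $F\in(k[\bar v,\bar w])^e$ it is an $F$-derivation if $\sum_{\mathbf i,\mathbf j}D_{\mathbf j}(D_{\mathbf i}(r))\bar v^{\mathbf i}\bar w^{\mathbf j}=\sum_{\mathbf i}D_{\mathbf i}(r)F(\bar v,\bar w)^{\mathbf i}$ for all $r$. An $F$-field is a field $K\supseteq k$ with an $F$-derivation $\mathbb D$. The field of constants is $C_K:=\bigcap_{l=1}^e\ker D_{\varepsilon_l}$, $\varepsilon_l$ the $l$-th unit vector. *)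

theory Defs
  imports Complex_Main "HOL-Library.Extended_Nat" "HOL-Computational_Algebra.Primes"
begin

text \<open>A multi-index is a function nat => nat; a power series in the variables
  indexed by {..<n} is a coefficient function on multi-indices (coefficients at
  multi-indices using variables outside {..<n} are required to vanish, see is_mps).\<close>

type_synonym 'a mps = "(nat \<Rightarrow> nat) \<Rightarrow> 'a"

definition msupp_in :: "nat \<Rightarrow> (nat \<Rightarrow> nat) \<Rightarrow> bool" where
  "msupp_in n a \<longleftrightarrow> (\<forall>l. n \<le> l \<longrightarrow> a l = 0)"

definition is_mps :: "nat \<Rightarrow> 'a::zero mps \<Rightarrow> bool" where
  "is_mps n f \<longleftrightarrow> (\<forall>a. \<not> msupp_in n a \<longrightarrow> f a = 0)"

definition tdeg :: "nat \<Rightarrow> (nat \<Rightarrow> nat) \<Rightarrow> nat" where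
  "tdeg n a = (\<Sum>l<n. a l)"

definition ps_one :: "'a::comm_ring_1 mps" where
  "ps_one = (\<lambda>a. if a = (\<lambda>_. 0) then 1 else 0)"

definition ps_var :: "nat \<Rightarrow> 'a::comm_ring_1 mps" where
  "ps_var i = (\<lambda>a. if a = (\<lambda>l. if l = i then 1 else 0) then 1 else 0)"

definition ps_add :: "'a::comm_ring_1 mps \<Rightarrow> 'a mps \<Rightarrow> 'a mps" where
  "ps_add f g = (\<lambda>a. f a + g a)"

definition ps_mult :: "'a::comm_ring_1 mps \<Rightarrow> 'a mps \<Rightarrow> 'a mps" where
  "ps_mult f g = (\<lambda>a. \<Sum>b\<in>{b. \<forall>l. b l \<le> a l}. f b * g (\<lambda>l. a l - b l))"

definition ps_pow :: "'a::comm_ring_1 mps \<Rightarrow> nat \<Rightarrow> 'a mps" where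
  "ps_pow f n = ((ps_mult f) ^^ n) ps_one"

fun ps_monprod :: "nat \<Rightarrow> (nat \<Rightarrow> 'a::comm_ring_1 mps) \<Rightarrow> (nat \<Rightarrow> nat) \<Rightarrow> 'a mps" where
  "ps_monprod 0 g i = ps_one"
| "ps_monprod (Suc n) g i = ps_mult (ps_monprod n g i) (ps_pow (g n) (i n))"

text \<open>Substitution f(g_0,...,g_(n-1)) of series g_j (zero constant term) into a
  series f in n variables: the coefficientwise (locally finite) sum of f_i * g^i.\<close>
definition ps_subst :: "nat \<Rightarrow> 'a::comm_ring_1 mps \<Rightarrow> (nat \<Rightarrow> 'a mps) \<Rightarrow> 'a mps" where
  "ps_subst n f g = (\<lambda>a. \<Sum>i\<in>{i. msupp_in n i \<and> f i * ps_monprod n g i a \<noteq> 0}.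
       f i * ps_monprod n g i a)"

definition is_subfield :: "'a::field set \<Rightarrow> bool" where
  "is_subfield k \<longleftrightarrow> 0 \<in> k \<and> 1 \<in> k \<and> (\<forall>x\<in>k. \<forall>y\<in>k. x + y \<in> k \<and> x * y \<in> k)
     \<and> (\<forall>x\<in>k. - x \<in> k \<and> inverse x \<in> k)"

text \<open>An e-dimensional formal group law over k: Phi_0..Phi_(e-1) in k[[X,Y]], where
  X_l is the variable l and Y_l the variable e+l; Phi(X,Y) = X + Y mod degree 2,
  and Phi(Phi(X,Y),Z) = Phi(X,Phi(Y,Z)) (Z_l is variable 2e+l).\<close>
definition formal_group_law :: "'a::field set \<Rightarrow> nat \<Rightarrow> (nat \<Rightarrow> 'a mps) \<Rightarrow> bool" where
  "formal_group_law k e \<Phi> \<longleftrightarrow>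
     (\<forall>l<e. is_mps (2*e) (\<Phi> l) \<and> (\<forall>a. \<Phi> l a \<in> k)) \<and>
     (\<forall>l<e. \<forall>a. msupp_in (2*e) a \<and> tdeg (2*e) a \<le> 1 \<longrightarrow>
          \<Phi> l a = ps_add (ps_var l) (ps_var (e+l)) a) \<and>
     (\<forall>l<e. \<forall>a. msupp_in (3*e) a \<longrightarrow>
          ps_subst (2*e) (\<Phi> l) (\<lambda>j. if j < e then \<Phi> j else ps_var (e+j)) a =
          ps_subst (2*e) (\<Phi> l) (\<lambda>j. if j < e then ps_var j
                 else ps_subst (2*e) (\<Phi> (j-e)) (\<lambda>t. ps_var (e+t))) a)"

definition below :: "nat \<Rightarrow> enat \<Rightarrow> nat \<Rightarrow> bool" where
  "below p m n = (case m of enat m' \<Rightarrow> n < p ^ m' | \<infinity> \<Rightarrow> True)"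

text \<open>multi-indices of the monomials surviving in R[X_0..X_(n-1)]/(X_l^(p^m))\<close>
definition trunc_idx :: "nat \<Rightarrow> enat \<Rightarrow> nat \<Rightarrow> (nat \<Rightarrow> nat) \<Rightarrow> bool" where
  "trunc_idx p m n a \<longleftrightarrow> msupp_in n a \<and> (\<forall>l<n. below p m (a l))"

definition ps_trunc :: "nat \<Rightarrow> enat \<Rightarrow> nat \<Rightarrow> 'a::comm_ring_1 mps \<Rightarrow> 'a mps" where
  "ps_trunc p m n f = (\<lambda>a. if trunc_idx p m n a then f a else 0)"

definition tmult :: "nat \<Rightarrow> enat \<Rightarrow> nat \<Rightarrow> 'a::comm_ring_1 mps \<Rightarrow> 'a mps \<Rightarrow> 'a mps" where
  "tmult p m n f g = ps_trunc p m n (ps_mult f g)"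

definition tpow :: "nat \<Rightarrow> enat \<Rightarrow> nat \<Rightarrow> 'a::comm_ring_1 mps \<Rightarrow> nat \<Rightarrow> 'a mps" where
  "tpow p m n f d = ((tmult p m n f) ^^ d) (ps_trunc p m n ps_one)"

fun tmonprod :: "nat \<Rightarrow> enat \<Rightarrow> nat \<Rightarrow> nat \<Rightarrow> (nat \<Rightarrow> 'a::comm_ring_1 mps) \<Rightarrow> (nat \<Rightarrow> nat) \<Rightarrow> 'a mps" where
  "tmonprod p m N 0 F t = ps_trunc p m N ps_one"
| "tmonprod p m N (Suc n) F t = tmult p m N (tmonprod p m N n F t) (tpow p m N (F n) (t n))"

definition Phi_trunc :: "nat \<Rightarrow> enat \<Rightarrow> nat \<Rightarrow> (nat \<Rightarrow> 'a::comm_ring_1 mps) \<Rightarrow> nat \<Rightarrow> 'a mps" where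
  "Phi_trunc p m e \<Phi> = (\<lambda>l. ps_trunc p m (2*e) (\<Phi> l))"

text \<open>m-truncated e-dimensional HS-derivation on the field (type) 'a over k:
  r \<mapsto> sum_i D_i(r) v^i is a k-algebra homomorphism into 'a[v], and D_0 = id.\<close>
definition hs_derivation :: "nat \<Rightarrow> enat \<Rightarrow> nat \<Rightarrow> 'a::field set \<Rightarrow> ((nat \<Rightarrow> nat) \<Rightarrow> 'a \<Rightarrow> 'a) \<Rightarrow> bool" where
  "hs_derivation p m e k D \<longleftrightarrow>
     (\<forall>r. D (\<lambda>_. 0) r = r) \<and>
     (\<forall>a. trunc_idx p m e a \<longrightarrow>
        (\<forall>r s. D a (r + s) = D a r + D a s \<and>
               D a (r * s) = (\<Sum>b\<in>{b. \<forall>l. b l \<le> a l}. D b r * D (\<lambda>l. a l - b l) s)) \<and>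
        (\<forall>c\<in>k. D a c = (if a = (\<lambda>_. 0) then c else 0)))"

text \<open>the monomial v^i w^j in the 2e variables v_0..v_(e-1), w_0..w_(e-1)\<close>
definition join_idx :: "nat \<Rightarrow> (nat \<Rightarrow> nat) \<Rightarrow> (nat \<Rightarrow> nat) \<Rightarrow> nat \<Rightarrow> nat" where
  "join_idx e i j = (\<lambda>l. if l < e then i l else j (l - e))"

text \<open>F-derivation: sum_(i,j) D_j(D_i r) v^i w^j = sum_t D_t(r) F(v,w)^t, compared
  coefficientwise (the right-hand side as a locally finite sum).\<close>
definition F_derivation :: "nat \<Rightarrow> enat \<Rightarrow> nat \<Rightarrow> (nat \<Rightarrow> 'a::field mps) \<Rightarrow> ((nat \<Rightarrow> nat) \<Rightarrow> 'a \<Rightarrow> 'a) \<Rightarrow> bool" where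
  "F_derivation p m e F D \<longleftrightarrow>
     (\<forall>r i j. trunc_idx p m e i \<longrightarrow> trunc_idx p m e j \<longrightarrow>
        D j (D i r) =
          (\<Sum>t\<in>{t. trunc_idx p m e t \<and> D t r * tmonprod p m (2*e) e F t (join_idx e i j) \<noteq> 0}.
              D t r * tmonprod p m (2*e) e F t (join_idx e i j)))"

definition constants :: "nat \<Rightarrow> ((nat \<Rightarrow> nat) \<Rightarrow> 'a \<Rightarrow> 'a::field) \<Rightarrow> 'a set" where
  "constants e D = {r. \<forall>l<e. D (\<lambda>t. if t = l then 1 else 0) r = 0}"

definition lin_indep_over :: "'a::field set \<Rightarrow> 'a set \<Rightarrow> bool" where
  "lin_indep_over C B \<longleftrightarrow> finite B \<and>
     (\<forall>c. (\<forall>b\<in>B. c b \<in> C) \<and> (\<Sum>b\<in>B. c b * b) = 0 \<longrightarrow> (\<forall>b\<in>B. c b = 0))"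

definition spans_over :: "'a::field set \<Rightarrow> 'a set \<Rightarrow> bool" where
  "spans_over C B \<longleftrightarrow> (\<forall>x. \<exists>c. (\<forall>b\<in>B. c b \<in> C) \<and> x = (\<Sum>b\<in>B. c b * b))"

definition field_degree_le :: "'a::field set \<Rightarrow> nat \<Rightarrow> bool" where
  "field_degree_le C n \<longleftrightarrow> (\<exists>B. lin_indep_over C B \<and> spans_over C B \<and> card B \<le> n)"

end

theory Submission imports Defs "HOL-Library.FuncSet" begin

definition fsupp :: "(nat \<Rightarrow> nat) \<Rightarrow> bool" where
  "fsupp a \<longleftrightarrow> finite {l. a l \<noteq> 0}"

definition LL :: "(nat \<Rightarrow> nat) \<Rightarrow> (nat \<Rightarrow> nat) set" where
  "LL a = {b. \<forall>l. b l \<le> a l}"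

definition pd :: "nat \<Rightarrow> 'a::comm_ring_1 mps \<Rightarrow> 'a mps" where
  "pd j f = (\<lambda>a. of_nat (Suc (a j)) * f (a(j := Suc (a j))))"

lemma pm_def: "ps_mult f g a = (\<Sum>b\<in>LL a. f b * g (\<lambda>l. a l - b l))"
  unfolding ps_mult_def LL_def by (rule refl)

lemma finite_LL: assumes "fsupp a" shows "finite (LL a)"
proof -
  let ?S = "{l. a l \<noteq> 0}"
  have "finite ?S" using assms by (simp add: fsupp_def)
  have "LL a \<subseteq> {f. \<forall>x. (x \<in> ?S \<longrightarrow> f x \<in> {0..Max (a ` ?S)}) \<and> (x \<notin> ?S \<longrightarrow> f x = 0)}"
  proof
    fix b assume "b \<in> LL a"
    hence b: "\<And>l. b l \<le> a l" by (simp add: LL_def)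
    show "b \<in> {f. \<forall>x. (x \<in> ?S \<longrightarrow> f x \<in> {0..Max (a ` ?S)}) \<and> (x \<notin> ?S \<longrightarrow> f x = 0)}"
    proof (intro CollectI allI conjI impI)
      fix x assume "x \<in> ?S"
      hence "a x \<le> Max (a ` ?S)" using \<open>finite ?S\<close> by (intro Max_ge) auto
      thus "b x \<in> {0..Max (a ` ?S)}" using b[of x] by simp
    next
      fix x assume "x \<notin> ?S" thus "b x = 0" using b[of x] by simp
    qed
  qed
  moreover have "finite {f. \<forall>x. (x \<in> ?S \<longrightarrow> f x \<in> {0..Max (a ` ?S)}) \<and> (x \<notin> ?S \<longrightarrow> f x = (0::nat))}"
    by (rule finite_set_of_finite_funs) (use \<open>finite ?S\<close> in auto)
  ultimately show ?thesis by (rule finite_subset)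
qed

lemma fsupp_le: assumes "fsupp a" "\<And>l. b l \<le> a l" shows "fsupp b"
proof -
  have "{l. b l \<noteq> 0} \<subseteq> {l. a l \<noteq> 0}"
  proof
    fix l assume "l \<in> {l. b l \<noteq> 0}"
    thus "l \<in> {l. a l \<noteq> 0}" using assms(2)[of l] by simp
  qed
  thus ?thesis using assms(1) finite_subset unfolding fsupp_def by blast
qed

lemma fsupp_LL: "fsupp a \<Longrightarrow> b \<in> LL a \<Longrightarrow> fsupp b"
  by (auto simp: LL_def intro: fsupp_le)

lemma fsupp_diff: "fsupp a \<Longrightarrow> fsupp (\<lambda>l. a l - b l)"
  by (rule fsupp_le) auto

lemma pm_comm: assumes "fsupp a" shows "ps_mult f g a = ps_mult g f a"
  unfolding pm_def
  by (rule sum.reindex_bij_witness[where i="\<lambda>b l. a l - b l" and j="\<lambda>b l. a l - b l"])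
     (auto simp: LL_def mult.commute fun_eq_iff)

lemma pm_cong2: assumes "fsupp a" "\<And>b. fsupp b \<Longrightarrow> h b = h' b"
  shows "ps_mult f h a = ps_mult f h' a"
  unfolding pm_def using assms fsupp_diff by (intro sum.cong) auto

lemma pm_cong1: assumes "fsupp a" "\<And>b. fsupp b \<Longrightarrow> h b = h' b"
  shows "ps_mult h f a = ps_mult h' f a"
  unfolding pm_def using assms fsupp_LL by (intro sum.cong) auto

lemma pm_assoc: assumes "fsupp a"
  shows "ps_mult (ps_mult f g) h a = ps_mult f (ps_mult g h) a"
proof -
  have fin: "finite (LL a)" using finite_LL assms .
  have "ps_mult (ps_mult f g) h a = (\<Sum>b\<in>LL a. \<Sum>c\<in>{c. c \<in> LL a \<and> c \<in> LL b}. f c * g (\<lambda>l. b l - c l) * h (\<lambda>l. a l - b l))"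
    unfolding pm_def sum_distrib_right
    by (intro sum.cong refl) (auto simp: LL_def intro: le_trans)
  also have "\<dots> = (\<Sum>c\<in>LL a. \<Sum>b\<in>{b. b \<in> LL a \<and> c \<in> LL b}. f c * g (\<lambda>l. b l - c l) * h (\<lambda>l. a l - b l))"
    by (rule sum.swap_restrict[OF fin fin])
  also have "\<dots> = (\<Sum>c\<in>LL a. \<Sum>d\<in>LL (\<lambda>l. a l - c l). f c * (g d * h (\<lambda>l. (a l - c l) - d l)))"
  proof (rule sum.cong[OF refl])
    fix c assume c: "c \<in> LL a"
    show "(\<Sum>b\<in>{b. b \<in> LL a \<and> c \<in> LL b}. f c * g (\<lambda>l. b l - c l) * h (\<lambda>l. a l - b l)) =
      (\<Sum>d\<in>LL (\<lambda>l. a l - c l). f c * (g d * h (\<lambda>l. (a l - c l) - d l)))"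
    proof (rule sum.reindex_bij_witness[where i="\<lambda>d l. c l + d l" and j="\<lambda>b l. b l - c l"])
      fix b assume "b \<in> {b. b \<in> LL a \<and> c \<in> LL b}"
      hence b1: "\<And>l. b l \<le> a l" "\<And>l. c l \<le> b l" by (auto simp: LL_def)
      show "(\<lambda>l. b l - c l) \<in> LL (\<lambda>l. a l - c l)" using b1 by (auto simp: LL_def intro: diff_le_mono)
      show "(\<lambda>l. c l + (b l - c l)) = b" using b1 by (intro ext) (simp add: b1)
      have "(\<lambda>l. a l - c l - (b l - c l)) = (\<lambda>l. a l - b l)"
      proof (rule ext)
        fix l show "a l - c l - (b l - c l) = a l - b l" using b1(1)[of l] b1(2)[of l] by linarith
      qed
      thus "f c * (g (\<lambda>l. b l - c l) * h (\<lambda>l. a l - c l - (b l - c l))) = f c * g (\<lambda>l. b l - c l) * h (\<lambda>l. a l - b l)"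
        by (simp add: mult.assoc)
    next
      fix d assume "d \<in> LL (\<lambda>l. a l - c l)"
      hence d1: "\<And>l. d l \<le> a l - c l" by (auto simp: LL_def)
      have c1: "\<And>l. c l \<le> a l" using c by (auto simp: LL_def)
      show "(\<lambda>l. c l + d l - c l) = d" by simp
      show "(\<lambda>l. c l + d l) \<in> {b. b \<in> LL a \<and> c \<in> LL b}"
      proof -
        have "\<And>l. c l + d l \<le> a l" using d1 c1 by (metis add.commute le_diff_conv2)
        thus ?thesis by (auto simp: LL_def)
      qed
    qed
  qed
  also have "\<dots> = ps_mult f (ps_mult g h) a"
    unfolding pm_def sum_distrib_left by simp
  finally show ?thesis .
qed

lemma LL_zero_iff: "b \<in> LL a \<Longrightarrow> (\<lambda>l. a l - b l) = (\<lambda>_. 0) \<longleftrightarrow> b = a"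
  by (auto simp: LL_def fun_eq_iff intro: le_antisym)

lemma a_in_LL: "a \<in> LL a" by (simp add: LL_def)

lemma pm_one_right: assumes "fsupp a" shows "ps_mult f ps_one a = f a"
proof -
  have "ps_mult f ps_one a = (\<Sum>b\<in>LL a. if b = a then f b else 0)"
    unfolding pm_def ps_one_def by (intro sum.cong refl) (auto simp: LL_zero_iff)
  also have "\<dots> = f a" using finite_LL[OF assms] a_in_LL by simp
  finally show ?thesis .
qed

lemma pm_one_left: assumes "fsupp a" shows "ps_mult ps_one f a = f a"
  using pm_comm[OF assms] pm_one_right[OF assms] by metis

lemma pm_zero_right: "ps_mult f (\<lambda>_. 0) a = 0"
  by (simp add: pm_def)

lemma pm_scal: "ps_mult f (\<lambda>b. s * h b) a = s * ps_mult f h a"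
  by (simp add: pm_def sum_distrib_left algebra_simps)

lemma pm_add2: "ps_mult f (\<lambda>b. h1 b + h2 b) a = ps_mult f h1 a + ps_mult f h2 a"
  by (simp add: pm_def sum.distrib algebra_simps)

lemma pd_prod: assumes "fsupp a"
  shows "pd j (ps_mult f g) a = ps_mult (pd j f) g a + ps_mult f (pd j g) a"
proof -
  define a' where "a' = a(j := Suc (a j))"
  have sub: "{l. a' l \<noteq> 0} \<subseteq> insert j {l. a l \<noteq> 0}" by (auto simp: a'_def)
  have fa': "fsupp a'" using assms sub finite_subset unfolding fsupp_def by blast
  have fin: "finite (LL a')" using finite_LL[OF fa'] .
  have LLsub: "LL a \<subseteq> LL a'"
  proof
    fix c assume "c \<in> LL a"
    hence "\<And>l. c l \<le> a l" by (simp add: LL_def)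
    hence "\<And>l. c l \<le> a' l" by (simp add: a'_def le_SucI)
    thus "c \<in> LL a'" by (simp add: LL_def)
  qed
  have "ps_mult (pd j f) g a = (\<Sum>c\<in>LL a. of_nat (Suc (c j)) * f (c(j := Suc (c j))) * g (\<lambda>l. a l - c l))"
    by (simp add: pm_def pd_def)
  also have "\<dots> = (\<Sum>c\<in>{c\<in>LL a'. c j \<noteq> 0}. of_nat (c j) * f c * g (\<lambda>l. a' l - c l))"
  proof (rule sum.reindex_bij_witness[where i="\<lambda>c. c(j := c j - 1)" and j="\<lambda>c. c(j := Suc (c j))"])
    fix c assume "c \<in> LL a"
    hence c1: "\<And>l. c l \<le> a l" by (simp add: LL_def)
    show "(c(j := Suc (c j)))(j := (c(j := Suc (c j))) j - 1) = c" by simp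
    have "\<And>l. (c(j := Suc (c j))) l \<le> a' l" using c1 by (simp add: a'_def)
    thus "c(j := Suc (c j)) \<in> {c \<in> LL a'. c j \<noteq> 0}" by (simp add: LL_def)
    have "(\<lambda>l. a' l - (c(j := Suc (c j))) l) = (\<lambda>l. a l - c l)"
      by (rule ext) (simp add: a'_def)
    thus "of_nat ((c(j := Suc (c j))) j) * f (c(j := Suc (c j))) * g (\<lambda>l. a' l - (c(j := Suc (c j))) l) =
      of_nat (Suc (c j)) * f (c(j := Suc (c j))) * g (\<lambda>l. a l - c l)" by simp
  next
    fix b assume "b \<in> {c \<in> LL a'. c j \<noteq> 0}"
    hence b1: "\<And>l. b l \<le> a' l" "b j \<noteq> 0" by (auto simp: LL_def)
    show "(b(j := b j - 1))(j := Suc ((b(j := b j - 1)) j)) = b" using b1(2) by simp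
    have "\<And>l. (b(j := b j - 1)) l \<le> a l"
    proof -
      fix l show "(b(j := b j - 1)) l \<le> a l"
        using b1(1)[of l] by (cases "l = j") (auto simp: a'_def)
    qed
    thus "b(j := b j - 1) \<in> LL a" by (simp add: LL_def)
  qed
  also have "\<dots> = (\<Sum>c\<in>LL a'. of_nat (c j) * f c * g (\<lambda>l. a' l - c l))"
    by (rule sum.mono_neutral_left[OF fin]) auto
  finally have 1: "ps_mult (pd j f) g a = (\<Sum>c\<in>LL a'. of_nat (c j) * f c * g (\<lambda>l. a' l - c l))" .
  have "ps_mult f (pd j g) a = (\<Sum>c\<in>LL a. of_nat (a' j - c j) * f c * g (\<lambda>l. a' l - c l))"
    unfolding pm_def pd_def
  proof (rule sum.cong[OF refl])
    fix c assume "c \<in> LL a"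
    hence c1: "\<And>l. c l \<le> a l" by (simp add: LL_def)
    have e1: "Suc (a j - c j) = a' j - c j" using c1[of j] by (simp add: a'_def Suc_diff_le)
    have e2: "(\<lambda>l. a l - c l)(j := Suc (a j - c j)) = (\<lambda>l. a' l - c l)"
    proof (rule ext)
      fix l show "((\<lambda>l. a l - c l)(j := Suc (a j - c j))) l = a' l - c l"
        using e1 by (cases "l = j") (simp_all add: a'_def)
    qed
    show "f c * (of_nat (Suc (a j - c j)) * g ((\<lambda>l. a l - c l)(j := Suc (a j - c j)))) =
      of_nat (a' j - c j) * f c * g (\<lambda>l. a' l - c l)"
      by (subst e2) (simp add: e1)
  qed
  also have "\<dots> = (\<Sum>c\<in>LL a'. of_nat (a' j - c j) * f c * g (\<lambda>l. a' l - c l))"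
  proof (rule sum.mono_neutral_left[OF fin LLsub], rule ballI)
    fix c assume "c \<in> LL a' - LL a"
    then obtain l where l: "\<not> c l \<le> a l" and c1: "\<forall>l. c l \<le> a' l" by (auto simp: LL_def)
    have "l = j"
    proof (rule ccontr)
      assume "l \<noteq> j" hence "a' l = a l" by (simp add: a'_def)
      with l c1 show False by (metis)
    qed
    hence "c j = a' j" using l c1 spec[OF c1, of j] by (simp add: a'_def)
    thus "of_nat (a' j - c j) * f c * g (\<lambda>l. a' l - c l) = 0" by simp
  qed
  finally have 2: "ps_mult f (pd j g) a = (\<Sum>c\<in>LL a'. of_nat (a' j - c j) * f c * g (\<lambda>l. a' l - c l))" .
  have "pd j (ps_mult f g) a = (\<Sum>c\<in>LL a'. of_nat (a' j) * f c * g (\<lambda>l. a' l - c l))"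
    by (simp add: pd_def pm_def a'_def sum_distrib_left mult.assoc)
  also have "\<dots> = (\<Sum>c\<in>LL a'. of_nat (c j) * f c * g (\<lambda>l. a' l - c l) + of_nat (a' j - c j) * f c * g (\<lambda>l. a' l - c l))"
  proof (rule sum.cong[OF refl])
    fix c assume "c \<in> LL a'"
    hence "c j \<le> a' j" by (simp add: LL_def)
    hence "of_nat (a' j) = (of_nat (c j) + of_nat (a' j - c j) :: 'a)" by (simp flip: of_nat_add)
    thus "of_nat (a' j) * f c * g (\<lambda>l. a' l - c l) = of_nat (c j) * f c * g (\<lambda>l. a' l - c l) + of_nat (a' j - c j) * f c * g (\<lambda>l. a' l - c l)"
      by (simp add: algebra_simps)
  qed
  also have "\<dots> = ps_mult (pd j f) g a + ps_mult f (pd j g) a"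
    unfolding 1 2 by (rule sum.distrib)
  finally show ?thesis .
qed

lemma pd_one: "pd j ps_one = (\<lambda>_. 0)"
proof (rule ext)
  fix a :: "nat \<Rightarrow> nat"
  have "a(j := Suc (a j)) \<noteq> (\<lambda>_. 0)"
  proof
    assume "a(j := Suc (a j)) = (\<lambda>_. 0)"
    hence "(a(j := Suc (a j))) j = 0" by simp
    thus False by simp
  qed
  thus "pd j ps_one a = 0" by (simp add: pd_def ps_one_def)
qed

lemma ps_pow_Suc: "ps_pow G (Suc n) = ps_mult G (ps_pow G n)"
  by (simp add: ps_pow_def)

lemma ps_pow_0: "ps_pow G 0 = ps_one"
  by (simp add: ps_pow_def)

lemma pd_pow: "fsupp a \<Longrightarrow> pd j (ps_pow G (Suc n)) a = of_nat (Suc n) * ps_mult (ps_pow G n) (pd j G) a"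
proof (induction n arbitrary: a)
  case 0
  have "pd j (ps_pow G (Suc 0)) a = ps_mult (pd j G) ps_one a + ps_mult G (pd j ps_one) a"
    unfolding ps_pow_Suc ps_pow_0 by (rule pd_prod[OF 0])
  also have "\<dots> = pd j G a" by (simp add: pm_one_right[OF 0] pd_one pm_zero_right)
  also have "\<dots> = of_nat (Suc 0) * ps_mult (ps_pow G 0) (pd j G) a"
    by (simp add: ps_pow_0 pm_one_left[OF 0])
  finally show ?case .
next
  case (Suc n)
  have "pd j (ps_pow G (Suc (Suc n))) a = ps_mult (pd j G) (ps_pow G (Suc n)) a + ps_mult G (pd j (ps_pow G (Suc n))) a"
    unfolding ps_pow_Suc[of G "Suc n"] by (rule pd_prod[OF Suc.prems])
  also have "ps_mult G (pd j (ps_pow G (Suc n))) a = ps_mult G (\<lambda>b. of_nat (Suc n) * ps_mult (ps_pow G n) (pd j G) b) a"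
    by (rule pm_cong2[OF Suc.prems Suc.IH])
  also have "\<dots> = of_nat (Suc n) * ps_mult G (ps_mult (ps_pow G n) (pd j G)) a"
    by (rule pm_scal)
  also have "ps_mult G (ps_mult (ps_pow G n) (pd j G)) a = ps_mult (ps_pow G (Suc n)) (pd j G) a"
    unfolding ps_pow_Suc by (rule pm_assoc[OF Suc.prems, symmetric])
  also have "ps_mult (pd j G) (ps_pow G (Suc n)) a = ps_mult (ps_pow G (Suc n)) (pd j G) a"
    by (rule pm_comm[OF Suc.prems])
  finally show ?case by (simp add: algebra_simps)
qed

lemma of_nat_nonzero_char:
  assumes "prime p" "of_nat p = (0::'a::field)" "0 < n" "n < p"
  shows "of_nat n \<noteq> (0::'a)"
proof
  assume n0: "of_nat n = (0::'a)"
  have "\<not> p dvd n" using assms(3,4) by (auto dest: dvd_imp_le)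
  hence "coprime p n" using assms(1) by (simp add: prime_imp_coprime)
  hence g: "gcd n p = 1" by (simp add: coprime_iff_gcd_eq_1 gcd.commute)
  obtain x y where "n * x = p * y + gcd n p" using bezout_nat[of n p] assms(3) by auto
  hence "of_nat (n * x) = (of_nat (p * y + 1) :: 'a)" using g by simp
  thus False using n0 assms(2) by simp
qed

lemma frob:
  assumes "of_nat p = (0::'a::field)" "0 < p" "fsupp c" "c j \<noteq> 0" "of_nat (c j) \<noteq> (0::'a)"
  shows "ps_pow (G :: 'a mps) p c = 0"
proof -
  define a where "a = c(j := c j - 1)"
  have "{l. a l \<noteq> 0} \<subseteq> {l. c l \<noteq> 0}" by (auto simp: a_def)
  hence fa: "fsupp a" using assms(3) finite_subset unfolding fsupp_def by blast
  have ac: "a(j := Suc (a j)) = c" using assms(4) by (auto simp: a_def)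
  have sa: "Suc (a j) = c j" using assms(4) by (simp add: a_def)
  have "pd j (ps_pow G p) a = of_nat (c j) * ps_pow G p c"
    unfolding pd_def using ac sa by simp
  moreover have "pd j (ps_pow G (Suc (p - 1))) a = of_nat (Suc (p - 1)) * ps_mult (ps_pow G (p - 1)) (pd j G) a"
    by (rule pd_pow[OF fa])
  ultimately have "of_nat (c j) * ps_pow G p c = 0" using assms(1,2) by simp
  thus ?thesis using assms(5) by simp
qed

definition ZZ :: "(nat \<Rightarrow> nat) \<Rightarrow> 'a::zero mps \<Rightarrow> bool" where
  "ZZ a f \<longleftrightarrow> (\<forall>c. (\<forall>x. c x \<le> a x) \<longrightarrow> f c = 0)"

lemma tmult_unfold: "tmult p m N f g c = (if trunc_idx p m N c then ps_mult f g c else 0)"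
  by (simp add: tmult_def ps_trunc_def)

lemma Z_tmult1: assumes "ZZ a f" shows "ZZ a (tmult p m N f g)"
  unfolding ZZ_def
proof (intro allI impI)
  fix c assume c: "\<forall>x. c x \<le> a x"
  have "ps_mult f g c = 0" unfolding pm_def
  proof (rule sum.neutral, rule ballI)
    fix b assume "b \<in> LL c"
    hence "\<forall>x. b x \<le> a x" using c by (auto simp: LL_def intro: le_trans)
    hence "f b = 0" using assms by (simp add: ZZ_def)
    thus "f b * g (\<lambda>l. c l - b l) = 0" by simp
  qed
  thus "tmult p m N f g c = 0" by (simp add: tmult_unfold)
qed

lemma Z_tmult2: assumes "ZZ a g" shows "ZZ a (tmult p m N f g)"
  unfolding ZZ_def
proof (intro allI impI)
  fix c assume c: "\<forall>x. c x \<le> a x"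
  have "ps_mult f g c = 0" unfolding pm_def
  proof (rule sum.neutral, rule ballI)
    fix b assume "b \<in> LL c"
    have "\<forall>x. c x - b x \<le> a x"
    proof
      fix x show "c x - b x \<le> a x" using c[rule_format, of x] by linarith
    qed
    hence "g (\<lambda>l. c l - b l) = 0" using assms by (simp add: ZZ_def)
    thus "f b * g (\<lambda>l. c l - b l) = 0" by simp
  qed
  thus "tmult p m N f g c = 0" by (simp add: tmult_unfold)
qed

lemma tpow_Suc: "tpow p m N G (Suc d) = tmult p m N G (tpow p m N G d)"
  by (simp add: tpow_def)

lemma Z_tpow: assumes "ZZ a (tpow p m N G q)" "q \<le> d" shows "ZZ a (tpow p m N G d)"
  using assms(2)
proof (induction d rule: dec_induct)
  case base thus ?case using assms(1) .
next
  case (step d) show ?case unfolding tpow_Suc by (rule Z_tmult2[OF step.IH])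
qed

lemma Z_tmonprod: assumes "s < n" "ZZ a (tpow p m N (F s) (t s))"
  shows "ZZ a (tmonprod p m N n F t)"
  using assms(1)
proof (induction n)
  case 0 thus ?case by simp
next
  case (Suc n)
  show ?case
  proof (cases "s = n")
    case True thus ?thesis using assms(2) by (simp add: Z_tmult2)
  next
    case False hence "s < n" using Suc.prems by simp
    thus ?thesis using Suc.IH by (simp add: Z_tmult1)
  qed
qed

lemma bridge:
  assumes tr: "\<And>c. (\<forall>x. c x \<le> a x) \<Longrightarrow> trunc_idx p m N c"
  shows "(\<forall>x. c x \<le> a x) \<Longrightarrow> tpow p m N G n c = ps_pow G n c"
proof (induction n arbitrary: c)
  case 0 thus ?case using tr[OF 0] by (simp add: tpow_def ps_pow_def ps_trunc_def)
next
  case (Suc n)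
  have "tpow p m N G (Suc n) c = ps_mult G (tpow p m N G n) c"
    unfolding tpow_Suc tmult_unfold using tr[OF Suc.prems] by simp
  also have "\<dots> = ps_mult G (ps_pow G n) c" unfolding pm_def
  proof (rule sum.cong[OF refl])
    fix b assume "b \<in> LL c"
    have "\<forall>x. c x - b x \<le> a x"
    proof
      fix x show "c x - b x \<le> a x" using Suc.prems[rule_format, of x] by linarith
    qed
    thus "G b * tpow p m N G n (\<lambda>l. c l - b l) = G b * ps_pow G n (\<lambda>l. c l - b l)"
      using Suc.IH by simp
  qed
  finally show ?case by (simp add: ps_pow_Suc)
qed

lemma LL_zero: "LL (\<lambda>_. 0) = {\<lambda>_. 0}"
  by (auto simp: LL_def)

lemma Kcore:
  assumes p: "prime p" and cp: "of_nat p = (0::'a::field)"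
    and tr: "\<And>c. (\<forall>x. c x \<le> a x) \<Longrightarrow> trunc_idx p m N c"
    and fa: "fsupp a" and sm: "\<forall>x. a x < p" and G0: "G (\<lambda>_. 0) = (0::'a)"
  shows "ZZ a (tpow p m N G p)"
  unfolding ZZ_def
proof (intro allI impI)
  fix c assume c: "\<forall>x. c x \<le> a x"
  have p0: "0 < p" using p prime_gt_0_nat by blast
  have "ps_pow G p c = 0"
  proof (cases "c = (\<lambda>_. 0)")
    case True
    have "ps_pow G (Suc (p - 1)) c = 0"
      unfolding ps_pow_Suc pm_def True LL_zero using G0 by simp
    thus ?thesis using p0 by simp
  next
    case False
    then obtain j where j: "c j \<noteq> 0" by auto
    have "c j < p" using c sm by (meson le_less_trans)
    hence "of_nat (c j) \<noteq> (0::'a)" using of_nat_nonzero_char[OF p cp] j by simp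
    moreover have "fsupp c" using c by (intro fsupp_le[OF fa]) auto
    ultimately show ?thesis using frob[of p c j G, OF cp p0 _ j] by blast
  qed
  thus "tpow p m N G p c = 0" using bridge[OF tr c, of G p] by simp
qed

lemma exists_sol:
  fixes v :: "'b \<Rightarrow> 'i \<Rightarrow> 'a::field"
  assumes "finite I" "finite B" "card I < card B"
  shows "\<exists>c. (\<exists>b\<in>B. c b \<noteq> 0) \<and> (\<forall>i\<in>I. (\<Sum>b\<in>B. c b * v b i) = 0)"
  using assms
proof (induction I arbitrary: B v rule: finite_induct)
  case empty
  hence "B \<noteq> {}" by auto
  then obtain b1 where "b1 \<in> B" by auto
  thus ?case by (intro exI[of _ "\<lambda>b. if b = b1 then 1 else 0"]) auto
next
  case (insert i I)
  have cI: "card I < card B" using insert by simp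
  show ?case
  proof (cases "\<forall>b\<in>B. v b i = 0")
    case True
    obtain c where c: "\<exists>b\<in>B. c b \<noteq> 0" "\<forall>j\<in>I. (\<Sum>b\<in>B. c b * v b j) = 0"
      using insert.IH[OF insert.prems(1) cI, of v] by blast
    have "(\<Sum>b\<in>B. c b * v b i) = 0" using True by simp
    thus ?thesis using c by auto
  next
    case False
    then obtain b1 where b1: "b1 \<in> B" "v b1 i \<noteq> 0" by auto
    define B' where "B' = B - {b1}"
    have fB': "finite B'" using insert.prems(1) by (simp add: B'_def)
    have cB': "card I < card B'" using insert.prems b1 insert.hyps by (simp add: B'_def)
    define w where "w b j = v b j - v b i / v b1 i * v b1 j" for b j
    obtain c' where c': "\<exists>b\<in>B'. c' b \<noteq> 0" "\<forall>j\<in>I. (\<Sum>b\<in>B'. c' b * w b j) = 0"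
      using insert.IH[OF fB' cB', of w] by blast
    define c where "c = c'(b1 := - (\<Sum>b\<in>B'. c' b * v b i) / v b1 i)"
    have key: "(\<Sum>b\<in>B. c b * v b j) = (\<Sum>b\<in>B'. c' b * w b j)" for j
    proof -
      have e0: "(\<Sum>b\<in>B. c b * v b j) = c b1 * v b1 j + (\<Sum>b\<in>B'. c b * v b j)"
        unfolding B'_def using insert.prems(1) b1(1) by (rule sum.remove)
      have e1: "(\<Sum>b\<in>B'. c b * v b j) = (\<Sum>b\<in>B'. c' b * v b j)"
        by (rule sum.cong) (auto simp: c_def B'_def)
      have "(\<Sum>b\<in>B'. c' b * w b j) = (\<Sum>b\<in>B'. c' b * v b j - (c' b * v b i) / v b1 i * v b1 j)"
        by (rule sum.cong) (simp_all add: w_def right_diff_distrib)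
      also have "\<dots> = (\<Sum>b\<in>B'. c' b * v b j) - (\<Sum>b\<in>B'. (c' b * v b i) / v b1 i * v b1 j)"
        by (rule sum_subtractf)
      also have "(\<Sum>b\<in>B'. (c' b * v b i) / v b1 i * v b1 j) = (\<Sum>b\<in>B'. c' b * v b i) / v b1 i * v b1 j"
        by (simp add: sum_distrib_right sum_divide_distrib)
      finally have e2: "(\<Sum>b\<in>B'. c' b * w b j) = (\<Sum>b\<in>B'. c' b * v b j) - (\<Sum>b\<in>B'. c' b * v b i) / v b1 i * v b1 j" .
      have cb1: "c b1 = - (\<Sum>b\<in>B'. c' b * v b i) / v b1 i" by (simp add: c_def)
      show ?thesis unfolding e0 e1 e2 cb1 by (simp add: algebra_simps)
    qed
    have wi: "w b i = 0" for b using b1(2) by (simp add: w_def)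
    show ?thesis
    proof (intro exI conjI)
      obtain b where "b \<in> B'" "c' b \<noteq> 0" using c' by blast
      thus "\<exists>b\<in>B. c b \<noteq> 0" by (intro bexI[of _ b]) (auto simp: c_def B'_def)
      show "\<forall>j\<in>insert i I. (\<Sum>b\<in>B. c b * v b j) = 0"
        using c'(2) by (auto simp: key wi)
    qed
  qed
qed

lemma degree_bound:
  fixes T :: "'i \<Rightarrow> 'a::field \<Rightarrow> 'a" and dd :: "nat \<Rightarrow> 'a \<Rightarrow> 'a"
  assumes finI: "finite I" and i0: "iz \<in> I" and Ti0: "\<forall>r. T iz r = r"
    and Tadd: "\<forall>i\<in>I. \<forall>r s. T i (r + s) = T i r + T i s"
    and ddadd: "\<forall>l<e. \<forall>r s. dd l (r + s) = dd l r + dd l s"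
    and ddmul: "\<forall>l<e. \<forall>r s. dd l (r * s) = dd l r * s + r * dd l s"
    and clos: "\<forall>l<e. \<forall>i\<in>I. \<exists>M. \<forall>r. dd l (T i r) = (\<Sum>t\<in>I. M t * T t r)"
  shows "field_degree_le {r. \<forall>l<e. dd l r = 0} (card I)"
proof -
  define C where "C = {r. \<forall>l<e. dd l r = 0}"
  have dd0: "dd l 0 = 0" if "l < e" for l
    using ddadd[rule_format, OF that, of 0 0] by (metis add_cancel_right_right add_0)
  have dd1: "dd l 1 = 0" if "l < e" for l
    using ddmul[rule_format, OF that, of 1 1] by (metis add_cancel_right_right mult_1 mult.right_neutral)
  have ddneg: "dd l (- x) = - dd l x" if "l < e" for l x
    using ddadd[rule_format, OF that, of x "- x"] dd0[OF that] by (simp add: eq_neg_iff_add_eq_0 add.commute)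
  have ddsum: "dd l (\<Sum>b\<in>B. f b) = (\<Sum>b\<in>B. dd l (f b))" if "l < e" "finite B" for l B and f :: "'b \<Rightarrow> 'a"
    using that(2) by (induction B rule: finite_induct) (simp_all add: dd0[OF that(1)] ddadd[rule_format, OF that(1)])
  have T0: "T i 0 = 0" if "i \<in> I" for i
    using Tadd[rule_format, OF that, of 0 0] by (metis add_cancel_right_right add_0)
  have C0: "0 \<in> C" and C1: "1 \<in> C" using dd0 dd1 by (auto simp: C_def)
  have Cmul: "x * y \<in> C" if "x \<in> C" "y \<in> C" for x y
    using that by (auto simp: C_def ddmul)
  have Cneg: "- x \<in> C" if "x \<in> C" for x
    using that by (auto simp: C_def ddneg)
  have Cinv: "inverse x \<in> C" if "x \<in> C" for x
  proof (cases "x = 0")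
    case True thus ?thesis using C0 by simp
  next
    case False
    show ?thesis unfolding C_def
    proof (intro CollectI allI impI)
      fix l assume l: "l < e"
      have "dd l (x * inverse x) = 0" using False dd1[OF l] by simp
      hence "x * dd l (inverse x) = 0" using ddmul[rule_format, OF l, of x "inverse x"] that l by (simp add: C_def)
      thus "dd l (inverse x) = 0" using False by simp
    qed
  qed
  have bound: "card B \<le> card I" if indep: "lin_indep_over C B" for B
  proof (rule ccontr)
    assume "\<not> card B \<le> card I"
    hence cB: "card I < card B" by simp
    have finB: "finite B" using indep by (simp add: lin_indep_over_def)
    define Sol where "Sol c \<longleftrightarrow> (\<exists>b\<in>B. c b \<noteq> 0) \<and> (\<forall>i\<in>I. (\<Sum>b\<in>B. c b * T i b) = 0)" for c
    have "\<exists>c. Sol c" unfolding Sol_def using exists_sol[OF finI finB cB, of "\<lambda>b i. T i b"] by blast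
    hence "\<exists>n c. Sol c \<and> card {b\<in>B. c b \<noteq> 0} = n" by blast
    define n0 where "n0 = (LEAST n. \<exists>c. Sol c \<and> card {b\<in>B. c b \<noteq> 0} = n)"
    obtain c where c: "Sol c" "card {b\<in>B. c b \<noteq> 0} = n0"
      using LeastI_ex[OF \<open>\<exists>n c. Sol c \<and> card {b\<in>B. c b \<noteq> 0} = n\<close>] unfolding n0_def by blast
    have minimal: "n0 \<le> card {b\<in>B. d b \<noteq> 0}" if "Sol d" for d
      unfolding n0_def using that by (intro Least_le) blast
    obtain b0 where b0: "b0 \<in> B" "c b0 \<noteq> 0" using c(1) by (auto simp: Sol_def)
    define c' where "c' b = c b / c b0" for b
    have supp': "{b\<in>B. c' b \<noteq> 0} = {b\<in>B. c b \<noteq> 0}" using b0 by (auto simp: c'_def)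
    have c'b0: "c' b0 = 1" using b0 by (simp add: c'_def)
    have solc': "(\<Sum>b\<in>B. c' b * T i b) = 0" if "i \<in> I" for i
    proof -
      have "(\<Sum>b\<in>B. c' b * T i b) = (\<Sum>b\<in>B. c b * T i b) / c b0"
        by (simp add: c'_def sum_divide_distrib)
      thus ?thesis using c(1) that by (simp add: Sol_def)
    qed
    have inC: "c' b \<in> C" if "b \<in> B" for b
    proof -
      have "dd l (c' b) = 0" if l: "l < e" for l
      proof (rule ccontr)
        assume nz: "dd l (c' b) \<noteq> 0"
        define d where "d b = dd l (c' b)" for b
        have "Sol d"
          unfolding Sol_def
        proof (intro conjI ballI)
          show "\<exists>b\<in>B. d b \<noteq> 0" using nz \<open>b \<in> B\<close> by (auto simp: d_def)
        next
          fix i assume i: "i \<in> I"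
          obtain M where M: "\<And>r. dd l (T i r) = (\<Sum>t\<in>I. M t * T t r)" using clos l i by blast
          have "0 = dd l (\<Sum>b\<in>B. c' b * T i b)" using solc'[OF i] dd0[OF l] by simp
          also have "\<dots> = (\<Sum>b\<in>B. d b * T i b + c' b * dd l (T i b))"
            by (simp add: ddsum[OF l finB] ddmul[rule_format, OF l] d_def)
          also have "\<dots> = (\<Sum>b\<in>B. d b * T i b) + (\<Sum>b\<in>B. \<Sum>t\<in>I. c' b * (M t * T t b))"
            by (simp add: sum.distrib M sum_distrib_left)
          also have "(\<Sum>b\<in>B. \<Sum>t\<in>I. c' b * (M t * T t b)) = (\<Sum>t\<in>I. M t * (\<Sum>b\<in>B. c' b * T t b))"
            by (subst sum.swap) (simp add: sum_distrib_left algebra_simps)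
          also have "\<dots> = 0" using solc' by simp
          finally show "(\<Sum>b\<in>B. d b * T i b) = 0" by simp
        qed
        have sub: "{b\<in>B. d b \<noteq> 0} \<subseteq> {b\<in>B. c' b \<noteq> 0} - {b0}"
          using dd0[OF l] dd1[OF l] c'b0 by (auto simp: d_def)
        have "card {b\<in>B. d b \<noteq> 0} < card {b\<in>B. c' b \<noteq> 0}"
        proof -
          have "card {b\<in>B. d b \<noteq> 0} \<le> card ({b\<in>B. c' b \<noteq> 0} - {b0})"
            using sub finB by (intro card_mono) auto
          also have "\<dots> < card {b\<in>B. c' b \<noteq> 0}"
            using finB b0 c'b0 by (intro card_Diff1_less) auto
          finally show ?thesis .
        qed
        thus False using minimal[OF \<open>Sol d\<close>] c(2) supp' by simp
      qed
      thus ?thesis by (simp add: C_def)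
    qed
    have "(\<Sum>b\<in>B. c' b * b) = 0" using solc'[OF i0] Ti0 by simp
    hence "\<forall>b\<in>B. c' b = 0" using indep inC unfolding lin_indep_over_def by blast
    thus False using b0 c'b0 by simp
  qed
  define P where "P k \<longleftrightarrow> (\<exists>B. lin_indep_over C B \<and> card B = k)" for k
  have P0: "P 0" unfolding P_def by (intro exI[of _ "{}"]) (simp add: lin_indep_over_def)
  have Pb: "\<forall>y. P y \<longrightarrow> y \<le> card I" using bound unfolding P_def by blast
  define K where "K = Greatest P"
  have K: "P K" "\<forall>y. P y \<longrightarrow> y \<le> K"
    unfolding K_def using GreatestI_nat[of P 0 "card I"] Greatest_le_nat[of P _ "card I"] P0 Pb by blast+
  obtain B where B: "lin_indep_over C B" "card B = K" using K(1) unfolding P_def by blast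
  have finB: "finite B" using B(1) by (simp add: lin_indep_over_def)
  have span: "spans_over C B"
    unfolding spans_over_def
  proof
    fix x
    show "\<exists>c. (\<forall>b\<in>B. c b \<in> C) \<and> x = (\<Sum>b\<in>B. c b * b)"
    proof (cases "x \<in> B")
      case True
      have "(\<Sum>b\<in>B. (if b = x then 1 else 0) * b) = (\<Sum>b\<in>B. if b = x then b else 0)"
        by (rule sum.cong) auto
      also have "\<dots> = x" using finB True by (simp add: sum.delta)
      finally have "(\<Sum>b\<in>B. (if b = x then 1 else 0) * b) = x" .
      thus ?thesis using C0 C1 by (intro exI[of _ "\<lambda>b. if b = x then 1 else 0"]) auto
    next
      case False
      have "card (insert x B) = Suc K" using False finB B(2) by simp
      hence "\<not> lin_indep_over C (insert x B)" using K(2) unfolding P_def by force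
      then obtain c where cC: "\<forall>b\<in>insert x B. c b \<in> C" and cs: "(\<Sum>b\<in>insert x B. c b * b) = 0"
        and cnz: "\<exists>b\<in>insert x B. c b \<noteq> 0"
        using finB unfolding lin_indep_over_def by auto
      have cs2: "c x * x + (\<Sum>b\<in>B. c b * b) = 0" using cs False finB by simp
      have cx: "c x \<noteq> 0"
      proof
        assume "c x = 0"
        hence "(\<Sum>b\<in>B. c b * b) = 0" using cs2 by simp
        hence "\<forall>b\<in>B. c b = 0" using B(1) cC unfolding lin_indep_over_def by blast
        thus False using cnz \<open>c x = 0\<close> by auto
      qed
      have "x = (\<Sum>b\<in>B. (- c b * inverse (c x)) * b)"
      proof -
        have "(\<Sum>b\<in>B. (- c b * inverse (c x)) * b) = - inverse (c x) * (\<Sum>b\<in>B. c b * b)"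
          by (simp add: sum_distrib_left algebra_simps)
        also have "(\<Sum>b\<in>B. c b * b) = - (c x * x)" using cs2 by (simp add: eq_neg_iff_add_eq_0 add.commute)
        finally show ?thesis using cx by simp
      qed
      moreover have "\<forall>b\<in>B. - c b * inverse (c x) \<in> C"
        using cC Cmul Cneg Cinv by auto
      ultimately show ?thesis by (intro exI[of _ "\<lambda>b. - c b * inverse (c x)"]) simp
    qed
  qed
  show ?thesis unfolding field_degree_le_def C_def[symmetric]
    using B span bound[OF B(1)] by blast
qed

lemma below_small: assumes "0 < m" "0 < p" "x < p" shows "below p m x"
proof (cases m)
  case (enat m')
  hence "1 \<le> m'" using assms(1) by (simp add: enat_0_iff(1) Suc_leI zero_enat_def)
  hence "p ^ 1 \<le> p ^ m'" using assms(2) by (intro power_increasing) auto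
  thus ?thesis using enat assms(3) by (simp add: below_def)
next
  case infinity thus ?thesis by (simp add: below_def)
qed

theorem lemma2p19:
  fixes k :: "'a::field set" and p e :: nat and m :: enat
    and \<Phi> :: "nat \<Rightarrow> 'a mps" and D :: "(nat \<Rightarrow> nat) \<Rightarrow> 'a \<Rightarrow> 'a"
  assumes "prime p" and "of_nat p = (0::'a)"
    and "is_subfield k"
    and "formal_group_law k e \<Phi>"
    and "m > 0"
    and "hs_derivation p m e k D"
    and "F_derivation p m e (Phi_trunc p m e \<Phi>) D"
  shows "field_degree_le (constants e D) (p ^ e)"
proof -
  note pr = assms(1) and cp = assms(2) and fgl = assms(4) and m0 = assms(5)
    and hs = assms(6) and Fd = assms(7)
  have p2: "2 \<le> p" using pr prime_ge_2_nat by blast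
  hence p0: "0 < p" by simp
  define eps where "eps l = (\<lambda>t::nat. if t = l then 1::nat else 0)" for l
  define I0 where "I0 = {i. msupp_in e i \<and> (\<forall>l<e. i l < p)}"
  define F where "F = Phi_trunc p m e \<Phi>"
  have bs: "\<And>x. x < p \<Longrightarrow> below p m x" using below_small[OF m0 p0] .
  have trI0: "trunc_idx p m e i" if "i \<in> I0" for i
    using that bs by (auto simp: I0_def trunc_idx_def)
  have treps: "trunc_idx p m e (eps l)" if "l < e" for l
    using that bs p2 by (auto simp: eps_def trunc_idx_def msupp_in_def)
  have zI0: "(\<lambda>_. 0) \<in> I0" using p0 by (simp add: I0_def msupp_in_def)
  have D0: "\<forall>r. D (\<lambda>_. 0) r = r" using hs by (simp add: hs_derivation_def)
  have Dadd: "\<forall>r s. D a (r + s) = D a r + D a s" if "trunc_idx p m e a" for a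
    using hs that by (simp add: hs_derivation_def)
  have Leps: "{b. \<forall>x. b x \<le> eps l x} = {(\<lambda>_. 0), eps l}" for l
  proof
    show "{b. \<forall>x. b x \<le> eps l x} \<subseteq> {(\<lambda>_. 0), eps l}"
    proof
      fix b assume "b \<in> {b. \<forall>x. b x \<le> eps l x}"
      hence H: "\<And>x. b x \<le> eps l x" by simp
      show "b \<in> {(\<lambda>_. 0), eps l}"
      proof (cases "b l = 0")
        case True
        have "b = (\<lambda>_. 0)"
        proof
          fix x show "b x = 0" using H[of x] True by (cases "x = l") (auto simp: eps_def)
        qed
        thus ?thesis by simp
      next
        case False
        have "b = eps l"
        proof
          fix x show "b x = eps l x" using H[of x] False by (cases "x = l") (auto simp: eps_def)
        qed
        thus ?thesis by simp
      qed
    qed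
    show "{(\<lambda>_. 0), eps l} \<subseteq> {b. \<forall>x. b x \<le> eps l x}" by auto
  qed
  have eps_ne: "(\<lambda>_. 0) \<noteq> eps l" for l
  proof
    assume "(\<lambda>_. 0) = eps l"
    hence "(0::nat) = eps l l" by metis
    thus False by (simp add: eps_def)
  qed
  have Dmul: "D (eps l) (r * s) = D (eps l) r * s + r * D (eps l) s" if l: "l < e" for l r s
  proof -
    have "D (eps l) (r * s) = (\<Sum>b\<in>{b. \<forall>x. b x \<le> eps l x}. D b r * D (\<lambda>x. eps l x - b x) s)"
      using hs treps[OF l] unfolding hs_derivation_def by blast
    also have "\<dots> = D (\<lambda>_. 0) r * D (\<lambda>x. eps l x - 0) s + D (eps l) r * D (\<lambda>x. eps l x - eps l x) s"
      unfolding Leps using eps_ne by simp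
    also have "(\<lambda>x. eps l x - 0) = eps l" by (rule ext) simp
    also have "(\<lambda>x. eps l x - eps l x) = (\<lambda>_. 0)" by (rule ext) simp
    finally show ?thesis using D0 by (simp add: mult.commute)
  qed
  have G0: "F s (\<lambda>_. 0) = 0" if s: "s < e" for s
  proof -
    have t0: "trunc_idx p m (2 * e) (\<lambda>_. 0)" using bs p0 by (simp add: trunc_idx_def msupp_in_def)
    have "\<Phi> s (\<lambda>_. 0) = ps_add (ps_var s) (ps_var (e + s)) (\<lambda>_. 0)"
      using fgl s unfolding formal_group_law_def by (simp add: msupp_in_def tdeg_def)
    also have "\<dots> = 0"
    proof -
      have nz: "(\<lambda>_. 0::nat) \<noteq> (\<lambda>l. if l = j then 1 else 0)" for j
      proof
        assume "(\<lambda>_. 0::nat) = (\<lambda>l. if l = j then 1 else 0)"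
        hence "(0::nat) = (if j = j then 1 else 0)" by metis
        thus False by simp
      qed
      show ?thesis using nz[of s] nz[of "e + s"] unfolding ps_add_def ps_var_def by simp
    qed
    finally show ?thesis using t0 by (simp add: F_def Phi_trunc_def ps_trunc_def)
  qed
  have Mzero: "tmonprod p m (2 * e) e F t (join_idx e i (eps l)) = 0"
    if i: "i \<in> I0" and l: "l < e" and s: "s < e" and ts: "p \<le> t s" for i l t s
  proof -
    define a where "a = join_idx e i (eps l)"
    have sm: "\<forall>x. a x < p"
    proof
      fix x show "a x < p" using i p2 by (auto simp: a_def join_idx_def eps_def I0_def)
    qed
    have ms: "msupp_in (2 * e) a"
      using i l by (auto simp: a_def join_idx_def eps_def I0_def msupp_in_def)
    have fa: "fsupp a"
    proof -
      have "{x. a x \<noteq> 0} \<subseteq> {..<2 * e}" using ms by (auto simp: msupp_in_def not_less[symmetric])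
      thus ?thesis unfolding fsupp_def by (rule finite_subset) simp
    qed
    have tr: "trunc_idx p m (2 * e) c" if c: "\<forall>x. c x \<le> a x" for c
      unfolding trunc_idx_def
    proof (intro conjI allI impI)
      show "msupp_in (2 * e) c" using ms c unfolding msupp_in_def by (metis le_zero_eq)
      fix x show "below p m (c x)" using c sm bs by (meson le_less_trans)
    qed
    have "ZZ a (tpow p m (2 * e) (F s) p)"
      by (rule Kcore[of p a m "2 * e" "F s", OF pr cp tr fa sm G0[OF s]])
    hence "ZZ a (tpow p m (2 * e) (F s) (t s))" using ts by (rule Z_tpow)
    hence "ZZ a (tmonprod p m (2 * e) e F t)" using s by (intro Z_tmonprod)
    thus ?thesis unfolding a_def[symmetric] ZZ_def by simp
  qed
  have finI0: "finite I0" and cardI0: "card I0 \<le> p ^ e"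
  proof -
    define ext where "ext f = (\<lambda>x. if x < e then f x else (0::nat))" for f :: "nat \<Rightarrow> nat"
    have sub: "I0 \<subseteq> ext ` (PiE {..<e} (\<lambda>_. {..<p}))"
    proof
      fix i assume "i \<in> I0"
      hence "i = ext (restrict i {..<e})" "restrict i {..<e} \<in> PiE {..<e} (\<lambda>_. {..<p})"
        by (auto simp: ext_def I0_def msupp_in_def fun_eq_iff restrict_PiE_iff restrict_apply)
      thus "i \<in> ext ` (PiE {..<e} (\<lambda>_. {..<p}))" by blast
    qed
    have fin: "finite (PiE {..<e} (\<lambda>_. {..<p}))" by (rule finite_PiE) auto
    show "finite I0" using sub fin by (meson finite_imageI finite_subset)
    have "card I0 \<le> card (ext ` (PiE {..<e} (\<lambda>_. {..<p})))"
      using sub fin by (intro card_mono) auto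
    also have "\<dots> \<le> card (PiE {..<e} (\<lambda>_. {..<p}))" by (rule card_image_le[OF fin])
    also have "\<dots> = p ^ e" by (simp add: card_PiE)
    finally show "card I0 \<le> p ^ e" .
  qed
  have clos: "\<forall>l<e. \<forall>i\<in>I0. \<exists>M. \<forall>r. D (eps l) (D i r) = (\<Sum>t\<in>I0. M t * D t r)"
  proof (intro allI impI ballI)
    fix l i assume l: "l < e" and i: "i \<in> I0"
    define M where "M t = tmonprod p m (2 * e) e F t (join_idx e i (eps l))" for t
    have M0: "M t = 0" if tt: "trunc_idx p m e t" "t \<notin> I0" for t
    proof -
      obtain s where "s < e" "p \<le> t s" using tt by (auto simp: I0_def trunc_idx_def not_less)
      thus ?thesis unfolding M_def using Mzero[OF i l] by blast
    qed
    show "\<exists>M. \<forall>r. D (eps l) (D i r) = (\<Sum>t\<in>I0. M t * D t r)"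
    proof (intro exI allI)
      fix r
      define S where "S = {t. trunc_idx p m e t \<and> D t r * M t \<noteq> 0}"
      have "D (eps l) (D i r) = (\<Sum>t\<in>S. D t r * M t)"
        using Fd trI0[OF i] treps[OF l] unfolding F_derivation_def S_def M_def F_def by blast
      also have "\<dots> = (\<Sum>t\<in>I0. D t r * M t)"
      proof (rule sum.mono_neutral_left[OF finI0])
        show "S \<subseteq> I0" using M0 by (auto simp: S_def)
        show "\<forall>t\<in>I0 - S. D t r * M t = 0" using trI0 by (auto simp: S_def)
      qed
      finally show "D (eps l) (D i r) = (\<Sum>t\<in>I0. M t * D t r)" by (simp add: mult.commute)
    qed
  qed
  have "field_degree_le {r. \<forall>l<e. D (eps l) r = 0} (card I0)"
  proof (rule degree_bound[where T = D and dd = "\<lambda>l. D (eps l)" and iz = "\<lambda>_. 0"])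
    show "finite I0" by (rule finI0)
    show "(\<lambda>_. 0) \<in> I0" by (rule zI0)
    show "\<forall>r. D (\<lambda>_. 0) r = r" by (rule D0)
    show "\<forall>i\<in>I0. \<forall>r s. D i (r + s) = D i r + D i s" using Dadd trI0 by blast
    show "\<forall>l<e. \<forall>r s. D (eps l) (r + s) = D (eps l) r + D (eps l) s" using Dadd treps by blast
    show "\<forall>l<e. \<forall>r s. D (eps l) (r * s) = D (eps l) r * s + r * D (eps l) s" using Dmul by blast
    show "\<forall>l<e. \<forall>i\<in>I0. \<exists>M. \<forall>r. D (eps l) (D i r) = (\<Sum>t\<in>I0. M t * D t r)" by (rule clos)
  qed
  moreover have "constants e D = {r. \<forall>l<e. D (eps l) r = 0}"
    by (simp add: constants_def eps_def)
  ultimately show ?thesis using cardI0 unfolding field_degree_le_def by (metis le_trans)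
qed

end
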